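(* For $\kappa=2,3,\dots$ and all $\mathrm b\in\mathbb R$, on the line $\mathbf C_{a^\kappa}=\{(\zeta_\kappa,\mathrm b):\mathrm b\in\mathbb R\}$ one has $\rho(\zeta_\kappa,\mathrm b)=\kappa\,\theta(\zeta_\kappa,\mathrm b)$ and $$\theta(\zeta_\kappa,\mathrm b)=\begin{cases}0,&\mathrm b>2,\\[2pt] \dfrac{\arccos(\mathrm b/2)}{\kappa\arccos(\mathrm b/2)+\pi},&|\mathrm b|\le2,\\[6pt] \dfrac1{\kappa+1},&\mathrm b<-2.\end{cases}$$ Symmetrically, for $\ell\ge2$, on the line $\mathbf C_{b^\ell}=\{(\mathrm a,\zeta_\ell):\mathrm a\in\mathbb R\}$ one has $\theta(\mathrm a,\zeta_\ell)=\theta(\zeta_\ell,\mathrm a)$ (given by the same formula with $\mathrm b$ replaced by $\mathrm a$ and $\kappa$ by $\ell$) and $\rho(\mathrm a,\zeta_\ell)=1-\rho(\zeta_\ell,\mathrm a)$.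
   Context: For real parameters $\mathrm a,\mathrm b$, the map $F:\mathbb R^2\to\mathbb R^2$ is $F(x,y)=(\mathrm a x-y,x)$ if $x>0$ or ($x=0$ and $y\le0$), and $F(x,y)=(\mathrm b x-y,x)$ otherwise. $\zeta_j=2\cos(\pi/j)$. To an $F$-orbit $(z_t)$ associate the word $W=w_0w_1\cdots$ with $w_t=a$ if $z_t$ lies in the open right half-plane or on the negative $y$-axis, and $w_t=b$ otherwise. $W_n$ is the length-$n$ prefix, and $|W_n|_u$ counts occurrences of the factor $u$. The rotation number is $\theta(\mathrm a,\mathrm b)=\lim_n\frac1n|W_n|_{ab}$ (independent of the orbit). The density is $\rho(\mathrm a,\mathrm b)=\lim_n\frac1{2n}(|W_n^+|_a+|W_n^-|_a)$, with $W^\pm$ the word of the orbit of $(0,\pm1)$. *)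

theory Defs
  imports Complex_Main
begin

definition Fmap :: "real \<Rightarrow> real \<Rightarrow> real \<times> real \<Rightarrow> real \<times> real" where
  "Fmap a b z = (let x = fst z; y = snd z in
     if x > 0 \<or> (x = 0 \<and> y \<le> 0) then (a * x - y, x) else (b * x - y, x))"

definition zeta :: "nat \<Rightarrow> real" where
  "zeta j = 2 * cos (pi / real j)"

definition letterA :: "real \<times> real \<Rightarrow> bool" where
  "letterA z \<longleftrightarrow> fst z > 0 \<or> (fst z = 0 \<and> snd z < 0)"

definition wordA :: "real \<Rightarrow> real \<Rightarrow> real \<times> real \<Rightarrow> nat \<Rightarrow> bool" where
  "wordA a b z t = letterA ((Fmap a b ^^ t) z)"

definition count_ab :: "real \<Rightarrow> real \<Rightarrow> real \<times> real \<Rightarrow> nat \<Rightarrow> nat" where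
  "count_ab a b z n = card {t. t + 1 < n \<and> wordA a b z t \<and> \<not> wordA a b z (t + 1)}"

definition count_a :: "real \<Rightarrow> real \<Rightarrow> real \<times> real \<Rightarrow> nat \<Rightarrow> nat" where
  "count_a a b z n = card {t. t < n \<and> wordA a b z t}"

definition theta_seq :: "real \<Rightarrow> real \<Rightarrow> real \<times> real \<Rightarrow> nat \<Rightarrow> real" where
  "theta_seq a b z n = real (count_ab a b z n) / real n"

definition rho_seq :: "real \<Rightarrow> real \<Rightarrow> nat \<Rightarrow> real" where
  "rho_seq a b n = (real (count_a a b (0, 1) n) + real (count_a a b (0, -1) n)) / (2 * real n)"

definition theta_formula :: "nat \<Rightarrow> real \<Rightarrow> real" where
  "theta_formula k b =
     (if b > 2 then 0
      else if \<bar>b\<bar> \<le> 2 then arccos (b / 2) / (real k * arccos (b / 2) + pi)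
      else 1 / (real k + 1))"

end

theory Submission
  imports Defs
begin


definition cab :: "(nat \<Rightarrow> bool) \<Rightarrow> nat \<Rightarrow> nat" where
  "cab w n = card {t. t + 1 < n \<and> w t \<and> \<not> w (t+1)}"
definition ca :: "(nat \<Rightarrow> bool) \<Rightarrow> nat \<Rightarrow> nat" where
  "ca w n = card {t. t < n \<and> w t}"

definition iab :: "(nat \<Rightarrow> bool) \<Rightarrow> nat \<Rightarrow> real" where
  "iab w t = (if 1 \<le> t \<and> w (t-1) \<and> \<not> w t then 1 else 0)"
definition ia :: "(nat \<Rightarrow> bool) \<Rightarrow> nat \<Rightarrow> real" where
  "ia w t = (if w t then 1 else 0)"

lemma cab_Suc: "real (cab w (Suc n)) = real (cab w n) + iab w n"
proof -
  have eq: "{t. t + 1 < Suc n \<and> w t \<and> \<not> w (t+1)} =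
     {t. t + 1 < n \<and> w t \<and> \<not> w (t+1)} \<union> {t. t + 1 = n \<and> w t \<and> \<not> w (t+1)}" by auto
  have f1: "finite {t. t + 1 < n \<and> w t \<and> \<not> w (t+1)}"
    by (rule finite_subset[of _ "{..<n}"]) auto
  have f2: "finite {t. t + 1 = n \<and> w t \<and> \<not> w (t+1)}"
    by (rule finite_subset[of _ "{..<n}"]) auto
  have c2: "card {t. t + 1 = n \<and> w t \<and> \<not> w (t+1)} = (if 1 \<le> n \<and> w (n-1) \<and> \<not> w n then 1 else 0)"
  proof (cases "1 \<le> n \<and> w (n-1) \<and> \<not> w n")
    case True
    then have e: "{t. t + 1 = n \<and> w t \<and> \<not> w (t+1)} = {n-1}" by auto
    show ?thesis unfolding e using True by simp
  next
    case False
    then have e: "{t. t + 1 = n \<and> w t \<and> \<not> w (t+1)} = {}" by auto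
    show ?thesis unfolding e using False by simp
  qed
  have "card ({t. t + 1 < n \<and> w t \<and> \<not> w (t+1)} \<union> {t. t + 1 = n \<and> w t \<and> \<not> w (t+1)})
     = card {t. t + 1 < n \<and> w t \<and> \<not> w (t+1)} + card {t. t + 1 = n \<and> w t \<and> \<not> w (t+1)}"
    by (rule card_Un_disjoint[OF f1 f2]) auto
  then show ?thesis unfolding cab_def eq c2 iab_def by simp
qed

lemma ca_Suc: "real (ca w (Suc n)) = real (ca w n) + ia w n"
proof -
  have eq: "{t. t < Suc n \<and> w t} = {t. t < n \<and> w t} \<union> {t. t = n \<and> w t}" by auto
  have f1: "finite {t. t < n \<and> w t}" by auto
  have c2: "card {t. t = n \<and> w t} = (if w n then 1 else 0)"
  proof (cases "w n")
    case True
    then have e: "{t. t = n \<and> w t} = {n}" by auto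
    show ?thesis unfolding e using True by simp
  next
    case False
    then have e: "{t. t = n \<and> w t} = {}" by auto
    show ?thesis unfolding e using False by simp
  qed
  have "card ({t. t < n \<and> w t} \<union> {t. t = n \<and> w t}) = card {t. t < n \<and> w t} + card {t. t = n \<and> w t}"
    by (rule card_Un_disjoint) auto
  then show ?thesis unfolding ca_def eq c2 ia_def by simp
qed

lemma cab_sum: "real (cab w n) = (\<Sum>t<n. iab w t)"
proof (induction n)
  case 0 then show ?case by (simp add: cab_def)
next
  case (Suc n) then show ?case by (simp add: cab_Suc)
qed

lemma ca_sum: "real (ca w n) = (\<Sum>t<n. ia w t)"
proof (induction n)
  case 0 then show ?case by (simp add: ca_def)
next
  case (Suc n) then show ?case by (simp add: ca_Suc)
qed

lemma sum_shift_split: "(\<Sum>t<n+(d::nat). (f::nat\<Rightarrow>real) t) = (\<Sum>t<n. f t) + (\<Sum>j<d. f (n+j))"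
  by (induction d) auto

lemma cab_mono: "n \<le> n' \<Longrightarrow> cab w n \<le> cab w n'"
  unfolding cab_def by (rule card_mono) (auto intro: finite_subset[of _ "{..<n'}"])

lemma ca_mono: "n \<le> n' \<Longrightarrow> ca w n \<le> ca w n'"
  unfolding ca_def by (rule card_mono) auto

lemma ca_le: "ca w n \<le> n"
  unfolding ca_def using card_mono[of "{..<n}" "{t. t < n \<and> w t}"] by auto

lemma ca_not: "real (ca (\<lambda>t. \<not> w t) n) = real n - real (ca w n)"
proof (induction n)
  case 0 then show ?case by (simp add: ca_def)
next
  case (Suc n) then show ?case by (simp add: ca_Suc ia_def)
qed

lemma cab_not_diff: "\<bar>real (cab (\<lambda>t. \<not> w t) n) - real (cab w n)\<bar> \<le> 1"
proof -
  have "n \<ge> 1 \<Longrightarrow> real (cab (\<lambda>t. \<not> w t) n) - real (cab w n) =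
     (if w 0 then (if w (n-1) then 0 else -1) else (if w (n-1) then 1 else 0))" for n
  proof (induction n rule: nat_induct_at_least)
    case base
    then show ?case by (simp add: cab_def)
  next
    case (Suc n)
    then show ?case by (auto simp: cab_Suc iab_def)
  qed
  moreover have "cab w 0 = 0" "cab (\<lambda>t. \<not> w t) 0 = 0" by (auto simp: cab_def)
  ultimately show ?thesis by (cases "n = 0") auto
qed



lemma lim_from_bound:
  fixes f :: "nat \<Rightarrow> real"
  assumes K: "K > 0" and b: "\<And>n. n \<ge> n0 \<Longrightarrow> \<bar>K * f n - c * real n\<bar> \<le> D"
  shows "(\<lambda>n. f n / real n) \<longlonglongrightarrow> c / K"
proof -
  have g0: "(\<lambda>n. (D / K) * inverse (real n)) \<longlonglongrightarrow> 0"
    using tendsto_mult[OF tendsto_const lim_inverse_n, of "D/K"] by simp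
  have ev: "eventually (\<lambda>n. norm (f n / real n - c / K) \<le> (D / K) * inverse (real n)) sequentially"
  proof (rule eventually_sequentiallyI[of "max n0 1"])
    fix n assume n: "max n0 1 \<le> n"
    then have np: "real n > 0" by auto
    have "f n / real n - c / K = (K * f n - c * real n) / (K * real n)"
      using K np by (simp add: field_simps)
    then have "norm (f n / real n - c / K) = \<bar>K * f n - c * real n\<bar> / (K * real n)"
      using K np by (simp add: abs_divide abs_mult)
    also have "\<dots> \<le> D / (K * real n)"
      using b[of n] n K np by (intro divide_right_mono) auto
    also have "\<dots> = (D / K) * inverse (real n)" by (simp add: field_simps)
    finally show "norm (f n / real n - c / K) \<le> (D / K) * inverse (real n)" .
  qed
  have "(\<lambda>n. f n / real n - c / K) \<longlonglongrightarrow> 0"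
    apply (rule tendsto_0_le[OF g0, of _ 1])
    apply (rule eventually_mono[OF ev])
    apply (simp only: mult_1_right real_norm_def)
    done
  from tendsto_add[OF this tendsto_const[of "c/K"]]
  show ?thesis by simp
qed

lemma exists_block:
  fixes e :: "nat \<Rightarrow> nat"
  assumes inc: "\<And>i. e i < e (Suc i)" and n: "e 0 \<le> n"
  shows "\<exists>m. e m \<le> n \<and> n < e (Suc m)"
  using n
proof (induction n rule: nat_induct_at_least)
  case base
  then show ?case using inc[of 0] by auto
next
  case (Suc n)
  then obtain m where m: "e m \<le> n" "n < e (Suc m)" by auto
  show ?case
  proof (cases "Suc n < e (Suc m)")
    case True then show ?thesis using m by (intro exI[of _ m]) auto
  next
    case False
    then have "Suc n = e (Suc m)" using m by auto
    then show ?thesis using inc[of "Suc m"] by (intro exI[of _ "Suc m"]) auto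
  qed
qed

lemma GB:
  fixes w :: "nat \<Rightarrow> bool" and e N :: "nat \<Rightarrow> nat" and k :: nat and L C :: real
  assumes k: "k \<ge> 1" and L: "L > 0"
    and eS: "\<And>i. e (Suc i) = e i + k + N i"
    and N1: "\<And>i. N i \<ge> 1"
    and wa: "\<And>i j. j < k \<Longrightarrow> w (e i + j)"
    and wb: "\<And>i j. k \<le> j \<Longrightarrow> j < k + N i \<Longrightarrow> \<not> w (e i + j)"
    and C: "\<And>m. \<bar>(\<Sum>i<m. real (N i)) - real m * L\<bar> \<le> C"
  shows "(\<lambda>n. real (cab w n) / real n) \<longlonglongrightarrow> 1 / (real k + L)"
    and "(\<lambda>n. real (ca w n) / real n) \<longlonglongrightarrow> real k / (real k + L)"
proof -
  define K where "K = real k + L"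
  have K: "K > 0" using L by (simp add: K_def)
  have s1: "real (cab w (e (Suc i))) = real (cab w (e i)) + 1" for i
  proof -
    have "real (cab w (e (Suc i))) = (\<Sum>t<e i + (k + N i). iab w t)"
      by (simp add: cab_sum eS add.assoc)
    also have "\<dots> = real (cab w (e i)) + (\<Sum>j<k + N i. iab w (e i + j))"
      by (simp add: sum_shift_split cab_sum)
    also have "(\<Sum>j<k + N i. iab w (e i + j)) = (\<Sum>j<k + N i. if j = k then 1 else 0)"
    proof (rule sum.cong)
      fix j assume j: "j \<in> {..<k + N i}"
      show "iab w (e i + j) = (if j = k then 1 else 0)"
      proof (cases "j < k")
        case True
        then have "w (e i + j)" by (rule wa)
        then show ?thesis using True by (simp add: iab_def)
      next
        case False
        show ?thesis
        proof (cases "j = k")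
          case True
          have "w (e i + k - 1)" using wa[of "k-1" i] k by simp
          moreover have "\<not> w (e i + k)" using wb[of k i] N1[of i] by simp
          ultimately show ?thesis using True k by (simp add: iab_def)
        next
          case False2: False
          have "\<not> w (e i + (j - 1))" using wb[of "j-1" i] False False2 j by simp
          then have "\<not> w (e i + j - 1)" using False False2 by (simp add: add_diff_eq)
          then show ?thesis using False2 by (simp add: iab_def)
        qed
      qed
    qed simp
    also have "\<dots> = 1" using N1[of i] by (simp add: sum.delta)
    finally show ?thesis .
  qed
  have s2: "real (ca w (e (Suc i))) = real (ca w (e i)) + real k" for i
  proof -
    have "real (ca w (e (Suc i))) = (\<Sum>t<e i + (k + N i). ia w t)"
      by (simp add: ca_sum eS add.assoc)
    also have "\<dots> = real (ca w (e i)) + (\<Sum>j<k + N i. ia w (e i + j))"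
      by (simp add: sum_shift_split ca_sum)
    also have "(\<Sum>j<k + N i. ia w (e i + j)) = (\<Sum>j<k + N i. if j < k then 1 else 0)"
      by (rule sum.cong) (auto simp: ia_def wa wb)
    also have "\<dots> = (\<Sum>j<k. if j < k then 1 else 0) + (\<Sum>j<N i. if k + j < k then 1 else 0)"
      by (rule sum_shift_split)
    also have "\<dots> = real k" by simp
    finally show ?thesis .
  qed
  have c1: "real (cab w (e m)) = real (cab w (e 0)) + real m" for m
    by (induction m) (simp_all add: s1)
  have c2: "real (ca w (e m)) = real (ca w (e 0)) + real k * real m" for m
    by (induction m) (simp_all add: s2 algebra_simps)
  have c3: "real (e m) = real (e 0) + real m * real k + (\<Sum>i<m. real (N i))" for m
    by (induction m) (simp_all add: eS algebra_simps)
  have inc: "e i < e (Suc i)" for i using eS[of i] N1[of i] by simp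
  define A where "A = real (e 0) + K + \<bar>C\<bar>"
  have A0: "A \<ge> 0" using K by (simp add: A_def)
  have pos: "- \<bar>C\<bar> \<le> real n - real m * K \<and> real n - real m * K \<le> A"
    if "e m \<le> n" "n < e (Suc m)" for n m
  proof -
    have "real (e m) \<le> real n" "real n \<le> real (e (Suc m))" using that by auto
    moreover have "\<bar>(\<Sum>i<m. real (N i)) - real m * L\<bar> \<le> C" by (rule C)
    moreover have "\<bar>(\<Sum>i<Suc m. real (N i)) - real (Suc m) * L\<bar> \<le> C" by (rule C)
    ultimately show ?thesis using c3[of m] c3[of "Suc m"]
      unfolding K_def A_def by (simp add: algebra_simps abs_le_iff)
  qed
  show "(\<lambda>n. real (cab w n) / real n) \<longlonglongrightarrow> 1 / (real k + L)"
  proof -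
    have "\<bar>K * real (cab w n) - 1 * real n\<bar> \<le> K * (real (cab w (e 0)) + 1) + A + \<bar>C\<bar>"
      if n: "n \<ge> e 0" for n
    proof -
      obtain m where m: "e m \<le> n" "n < e (Suc m)" using exists_block[OF inc n] by auto
      have "cab w (e m) \<le> cab w n" "cab w n \<le> cab w (e (Suc m))"
        using m by (auto intro: cab_mono)
      then have "real (cab w (e m)) \<le> real (cab w n)" "real (cab w n) \<le> real (cab w (e (Suc m)))"
        by auto
      then have cb: "real (cab w (e 0)) + real m \<le> real (cab w n)"
          "real (cab w n) \<le> real (cab w (e 0)) + real m + 1"
        using c1[of m] c1[of "Suc m"] by auto
      define X where "X = K * (real (cab w n) - real m)"
      define Y where "Y = real m * K - real n"
      define Z where "Z = K * (real (cab w (e 0)) + 1)"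
      have eq: "K * real (cab w n) - 1 * real n = X + Y"
        by (simp add: algebra_simps X_def Y_def)
      have "0 \<le> X" "X \<le> Z"
        using cb K unfolding X_def Z_def by (auto intro: mult_left_mono)
      moreover have "- \<bar>C\<bar> \<le> - Y" "- Y \<le> A" using pos[OF m] unfolding Y_def by auto
      ultimately show ?thesis unfolding eq Z_def[symmetric] using abs_ge_zero[of C] A0 unfolding abs_le_iff by (intro conjI; linarith)
    qed
    from lim_from_bound[OF K this] show ?thesis by (simp add: K_def)
  qed
  show "(\<lambda>n. real (ca w n) / real n) \<longlonglongrightarrow> real k / (real k + L)"
  proof -
    have "\<bar>K * real (ca w n) - real k * real n\<bar> \<le> K * (real (ca w (e 0)) + real k) + real k * (A + \<bar>C\<bar>)"
      if n: "n \<ge> e 0" for n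
    proof -
      obtain m where m: "e m \<le> n" "n < e (Suc m)" using exists_block[OF inc n] by auto
      have "ca w (e m) \<le> ca w n" "ca w n \<le> ca w (e (Suc m))"
        using m by (auto intro: ca_mono)
      then have "real (ca w (e m)) \<le> real (ca w n)" "real (ca w n) \<le> real (ca w (e (Suc m)))"
        by auto
      then have cb: "real (ca w (e 0)) + real k * real m \<le> real (ca w n)"
          "real (ca w n) \<le> real (ca w (e 0)) + real k * real m + real k"
        using c2[of m] c2[of "Suc m"] by (auto simp: algebra_simps)
      define X where "X = K * (real (ca w n) - real k * real m)"
      define Y where "Y = real k * (real m * K - real n)"
      define Z where "Z = K * (real (ca w (e 0)) + real k)"
      define Z2 where "Z2 = real k * (A + \<bar>C\<bar>)"
      have eq: "K * real (ca w n) - real k * real n = X + Y"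
        by (simp add: algebra_simps X_def Y_def)
      have "0 \<le> X" "X \<le> Z"
        using cb K unfolding X_def Z_def by (auto intro: mult_left_mono)
      moreover have "\<bar>Y\<bar> \<le> Z2" unfolding Y_def Z2_def
        using conjunct1[OF pos[OF m]] conjunct2[OF pos[OF m]] A0 abs_ge_zero[of C] by (auto simp: abs_mult abs_le_iff intro!: mult_left_mono)
      ultimately show ?thesis unfolding eq Z_def[symmetric] Z2_def[symmetric] unfolding abs_le_iff by (intro conjI; linarith)
    qed
    from lim_from_bound[OF K this] show ?thesis by (simp add: K_def)
  qed
qed



definition Am :: "real \<Rightarrow> real \<times> real \<Rightarrow> real \<times> real" where
  "Am c z = (c * fst z - snd z, fst z)"
definition negp :: "real \<times> real \<Rightarrow> real \<times> real" where
  "negp z = (- fst z, - snd z)"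
definition Ent :: "real \<times> real \<Rightarrow> bool" where
  "Ent z \<longleftrightarrow> fst z \<ge> 0 \<and> snd z < 0"

lemma Fmap_eq: "z \<noteq> (0,0) \<Longrightarrow> Fmap a b z = (if letterA z then Am a z else Am b z)"
  by (cases z) (auto simp: Fmap_def letterA_def Am_def Let_def)

lemma Am_nz: "z \<noteq> (0,0) \<Longrightarrow> Am c z \<noteq> (0,0)"
  by (cases z) (auto simp: Am_def)

lemma Fmap_nz: "z \<noteq> (0,0) \<Longrightarrow> Fmap a b z \<noteq> (0,0)"
  by (simp add: Fmap_eq Am_nz)

lemma Fpow_nz: "z \<noteq> (0,0) \<Longrightarrow> (Fmap a b ^^ t) z \<noteq> (0,0)"
  by (induction t) (auto simp: Fmap_nz)

lemma letter_neg: "z \<noteq> (0,0) \<Longrightarrow> letterA (negp z) = (\<not> letterA z)"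
  by (cases z) (auto simp: negp_def letterA_def)

lemma negp_nz: "z \<noteq> (0,0) \<Longrightarrow> negp z \<noteq> (0,0)"
  by (cases z) (auto simp: negp_def)

lemma negp_negp[simp]: "negp (negp z) = z"
  by (simp add: negp_def)

lemma Fmap_neg: "Fmap a b (negp z) = negp (Fmap b a z)"
  by (cases z) (auto simp: Fmap_def negp_def Let_def algebra_simps)

lemma Fpow_neg: "(Fmap a b ^^ t) (negp z) = negp ((Fmap b a ^^ t) z)"
  by (induction t) (auto simp: Fmap_neg)

lemma Ent_nz: "Ent z \<Longrightarrow> z \<noteq> (0,0)"
  by (auto simp: Ent_def)

lemma runA:
  fixes a b :: real and j :: nat
  shows "y \<noteq> (0,0) \<Longrightarrow> (\<forall>i<j. letterA ((Fmap a b ^^ i) y)) \<Longrightarrow> (Fmap a b ^^ j) y = (Am a ^^ j) y"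
proof (induction j)
  case 0 then show ?case by simp
next
  case (Suc j)
  then have "(Fmap a b ^^ j) y = (Am a ^^ j) y" by auto
  moreover have "letterA ((Fmap a b ^^ j) y)" using Suc by auto
  ultimately show ?case using Fpow_nz[OF Suc.prems(1), where a=a and b=b and t=j] by (simp add: Fmap_eq)
qed

lemma runB:
  fixes a b :: real and j :: nat
  shows "y \<noteq> (0,0) \<Longrightarrow> (\<forall>i<j. \<not> letterA ((Fmap a b ^^ i) y)) \<Longrightarrow> (Fmap a b ^^ j) y = (Am b ^^ j) y"
proof (induction j)
  case 0 then show ?case by simp
next
  case (Suc j)
  then have "(Fmap a b ^^ j) y = (Am b ^^ j) y" by auto
  moreover have "\<not> letterA ((Fmap a b ^^ j) y)" using Suc by auto
  ultimately show ?case using Fpow_nz[OF Suc.prems(1), where a=a and b=b and t=j] by (simp add: Fmap_eq)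
qed

definition Sk :: "nat \<Rightarrow> real \<Rightarrow> real" where
  "Sk k t = sin (t * pi / real k) / sin (pi / real k)"

lemma sin_pik_pos: "k \<ge> 2 \<Longrightarrow> sin (pi / real k) > 0"
  by (rule sin_gt_zero) (auto simp: field_simps)

lemma Sk_rec: "k \<ge> 2 \<Longrightarrow> zeta k * Sk k (t + 1) = Sk k (t + 2) + Sk k t"
proof -
  assume k: "k \<ge> 2"
  define al where "al = pi / real k"
  have s: "sin al > 0" using sin_pik_pos[OF k] by (simp add: al_def)
  have e1: "(t + 2) * pi / real k = (t + 1) * al + al" "t * pi / real k = (t + 1) * al - al"
    "(t+1) * pi / real k = (t + 1) * al"
    using k by (simp_all add: al_def field_simps)
  show ?thesis unfolding Sk_def zeta_def e1 al_def[symmetric] sin_add sin_diff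
    using s by (simp add: field_simps)
qed

lemma Apow: "k \<ge> 2 \<Longrightarrow> (Am (zeta k) ^^ j) (x, y) =
   (x * Sk k (real j + 1) - y * Sk k (real j), x * Sk k (real j) - y * Sk k (real j - 1))"
proof (induction j)
  case 0
  have "sin (- (pi / real k)) = - sin (pi / real k)" by simp
  then show ?case using sin_pik_pos[OF 0] by (simp add: Sk_def)
next
  case (Suc j)
  have r: "zeta k * Sk k (real j + 1) = Sk k (real j + 2) + Sk k (real j)"
    using Sk_rec[OF Suc.prems] .
  have r2: "zeta k * Sk k (real j) = Sk k (real j + 1) + Sk k (real j - 1)"
    using Sk_rec[OF Suc.prems, of "real j - 1"] by (simp add: add.commute)
  have "zeta k * (x * Sk k (real j + 1) - y * Sk k (real j)) - (x * Sk k (real j) - y * Sk k (real j - 1))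
     = x * (zeta k * Sk k (real j + 1)) - y * (zeta k * Sk k (real j)) - x * Sk k (real j) + y * Sk k (real j - 1)"
    by (simp add: algebra_simps)
  also have "\<dots> = x * Sk k (real j + 2) - y * Sk k (real j + 1)" unfolding r r2 by (simp add: algebra_simps)
  finally show ?case using Suc by (simp add: Am_def add.commute add.left_commute)
qed

lemma Sk_nonneg: "k \<ge> 2 \<Longrightarrow> 0 \<le> t \<Longrightarrow> t \<le> real k \<Longrightarrow> Sk k t \<ge> 0"
  unfolding Sk_def using sin_pik_pos[of k]
  by (intro divide_nonneg_pos sin_ge_zero) (auto simp: field_simps)

lemma Sk_pos: "k \<ge> 2 \<Longrightarrow> 0 < t \<Longrightarrow> t < real k \<Longrightarrow> Sk k t > 0"
  unfolding Sk_def using sin_pik_pos[of k]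
  by (intro divide_pos_pos sin_gt_zero) (auto simp: field_simps)

lemma Sk_k: "k \<ge> 2 \<Longrightarrow> Sk k (real k) = 0" "k \<ge> 2 \<Longrightarrow> Sk k (real k + 1) = -1"
  "k \<ge> 2 \<Longrightarrow> Sk k (real k - 1) = 1"
proof -
  assume k: "k \<ge> 2"
  have s: "sin (pi / real k) > 0" using sin_pik_pos[OF k] .
  show "Sk k (real k) = 0" using k by (simp add: Sk_def)
  have "(real k + 1) * pi / real k = pi + pi / real k" using k by (simp add: field_simps)
  then show "Sk k (real k + 1) = -1" using s by (simp add: Sk_def sin_add)
  have "(real k - 1) * pi / real k = pi - pi / real k" using k by (simp add: field_simps)
  then show "Sk k (real k - 1) = 1" using s by (simp add: Sk_def sin_diff)
qed

lemma Apow_k: "k \<ge> 2 \<Longrightarrow> (Am (zeta k) ^^ k) z = negp z"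
  by (cases z) (simp add: Apow Sk_k negp_def)

lemma Ablock_letters: "k \<ge> 2 \<Longrightarrow> Ent z \<Longrightarrow> j < k \<Longrightarrow> letterA ((Am (zeta k) ^^ j) z)"
proof -
  assume k: "k \<ge> 2" and E: "Ent z" and j: "j < k"
  obtain x y where z: "z = (x, y)" by (cases z)
  have x: "x \<ge> 0" and y: "y < 0" using E z by (auto simp: Ent_def)
  show ?thesis
  proof (cases "j = 0")
    case True then show ?thesis using x y z by (auto simp: letterA_def)
  next
    case False
    have "Sk k (real j + 1) \<ge> 0" using k j by (intro Sk_nonneg) auto
    moreover have "Sk k (real j) > 0" using k j False by (intro Sk_pos) auto
    ultimately have "x * Sk k (real j + 1) - y * Sk k (real j) > 0"
      using x y by (smt (verit) mult_nonneg_nonneg mult_neg_pos)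
    then show ?thesis using z k by (simp add: Apow letterA_def)
  qed
qed



definition Nf :: "real \<Rightarrow> real \<times> real \<Rightarrow> nat" where
  "Nf b y = (LEAST j. letterA ((Am b ^^ j) (negp y)))"
definition nxt :: "real \<Rightarrow> real \<times> real \<Rightarrow> real \<times> real" where
  "nxt b y = (Am b ^^ Nf b y) (negp y)"
definition HB :: "real \<Rightarrow> bool" where
  "HB b \<longleftrightarrow> (\<forall>w. w \<noteq> (0,0) \<longrightarrow> (\<exists>j. letterA ((Am b ^^ j) w)))"

lemma Ampow_nz: "z \<noteq> (0,0) \<Longrightarrow> (Am c ^^ j) z \<noteq> (0,0)"
  by (induction j) (auto simp: Am_nz)

lemma entry: "\<not> letterA p \<Longrightarrow> p \<noteq> (0,0) \<Longrightarrow> letterA (Am b p) \<Longrightarrow> Ent (Am b p)"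
  by (cases p; cases "fst p = 0") (auto simp: letterA_def Am_def Ent_def)

lemma Ent_letter: "Ent y \<Longrightarrow> letterA y"
  by (cases y) (auto simp: letterA_def Ent_def)

lemma Nf_props:
  assumes H: "HB b" and E: "Ent y"
  shows "Nf b y \<ge> 1" "\<And>j. j < Nf b y \<Longrightarrow> \<not> letterA ((Am b ^^ j) (negp y))"
    "letterA (nxt b y)" "Ent (nxt b y)"
proof -
  have nz: "negp y \<noteq> (0,0)" using negp_nz[OF Ent_nz[OF E]] .
  have nl: "\<not> letterA (negp y)" using letter_neg[OF Ent_nz[OF E]] Ent_letter[OF E] by simp
  obtain j0 where j0: "letterA ((Am b ^^ j0) (negp y))" using H nz unfolding HB_def by blast
  show la: "letterA (nxt b y)" unfolding nxt_def Nf_def by (rule LeastI[of _ j0]) (rule j0)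
  show nb: "\<And>j. j < Nf b y \<Longrightarrow> \<not> letterA ((Am b ^^ j) (negp y))"
    unfolding Nf_def by (rule not_less_Least)
  show N1: "Nf b y \<ge> 1"
  proof (rule ccontr)
    assume "\<not> 1 \<le> Nf b y"
    then have "Nf b y = 0" by simp
    then show False using la nl by (simp add: nxt_def)
  qed
  define p where "p = (Am b ^^ (Nf b y - 1)) (negp y)"
  have "nxt b y = Am b p" unfolding nxt_def p_def using N1
    by (metis Suc_diff_1 comp_apply funpow.simps(2) less_le_trans zero_less_one)
  moreover have "\<not> letterA p" unfolding p_def using nb N1 by simp
  moreover have "p \<noteq> (0,0)" unfolding p_def by (rule Ampow_nz[OF nz])
  ultimately show "Ent (nxt b y)" using la entry by metis
qed

lemma orbit_block:
  assumes k: "k \<ge> 2" and H: "HB b" and E: "Ent y"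
  shows "\<And>j. j < k \<Longrightarrow> letterA ((Fmap (zeta k) b ^^ j) y)"
    "\<And>j. k \<le> j \<Longrightarrow> j < k + Nf b y \<Longrightarrow> \<not> letterA ((Fmap (zeta k) b ^^ j) y)"
    "(Fmap (zeta k) b ^^ (k + Nf b y)) y = nxt b y"
proof -
  let ?F = "Fmap (zeta k) b"
  have nz: "y \<noteq> (0,0)" by (rule Ent_nz[OF E])
  have A: "j \<le> k \<Longrightarrow> (?F ^^ j) y = (Am (zeta k) ^^ j) y" for j
  proof (induction j)
    case 0 then show ?case by simp
  next
    case (Suc j)
    then have eq: "(?F ^^ j) y = (Am (zeta k) ^^ j) y" by simp
    have "letterA ((Am (zeta k) ^^ j) y)" using Ablock_letters[OF k E] Suc by simp
    moreover have "(Am (zeta k) ^^ j) y \<noteq> (0,0)" by (rule Ampow_nz[OF nz])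
    ultimately show ?case using eq by (simp add: Fmap_eq)
  qed
  show la: "\<And>j. j < k \<Longrightarrow> letterA (( ?F ^^ j) y)"
    using A Ablock_letters[OF k E] by simp
  have Fk: "(?F ^^ k) y = negp y" using A[of k] Apow_k[OF k] by simp
  have split: "(?F ^^ (k + j)) y = (?F ^^ j) (negp y)" for j
    using Fk by (simp add: funpow_add add.commute[of k])
  have nzn: "negp y \<noteq> (0,0)" by (rule negp_nz[OF nz])
  have B: "j \<le> Nf b y \<Longrightarrow> (?F ^^ j) (negp y) = (Am b ^^ j) (negp y)" for j
  proof (induction j)
    case 0 then show ?case by simp
  next
    case (Suc j)
    then have eq: "(?F ^^ j) (negp y) = (Am b ^^ j) (negp y)" by simp
    have "\<not> letterA ((Am b ^^ j) (negp y))" using Nf_props(2)[OF H E] Suc by simp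
    moreover have "(Am b ^^ j) (negp y) \<noteq> (0,0)" by (rule Ampow_nz[OF nzn])
    ultimately show ?case using eq by (simp add: Fmap_eq)
  qed
  show "\<And>j. k \<le> j \<Longrightarrow> j < k + Nf b y \<Longrightarrow> \<not> letterA ((?F ^^ j) y)"
  proof -
    fix j assume j: "k \<le> j" "j < k + Nf b y"
    then obtain i where i: "j = k + i" "i < Nf b y" by (metis add_less_cancel_left le_Suc_ex)
    show "\<not> letterA ((?F ^^ j) y)" using i split[of i] B[of i] Nf_props(2)[OF H E, of i] by simp
  qed
  show "(?F ^^ (k + Nf b y)) y = nxt b y"
    using split B[of "Nf b y"] by (simp add: nxt_def)
qed

lemma first_entry:
  assumes k: "k \<ge> 2" and H: "HB b" and z: "z \<noteq> (0,0)"
  shows "\<exists>e0. Ent ((Fmap (zeta k) b ^^ e0) z)"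
proof -
  let ?F = "Fmap (zeta k) b"
  have "\<exists>t0. \<not> letterA ((?F ^^ t0) z)"
  proof (rule ccontr)
    assume "\<not> ?thesis"
    then have all: "\<And>t. letterA ((?F ^^ t) z)" by auto
    have "(?F ^^ k) z = (Am (zeta k) ^^ k) z" using runA[OF z] all by blast
    then have "(?F ^^ k) z = negp z" using Apow_k[OF k] by simp
    then show False using all[of k] all[of 0] letter_neg[OF z] by simp
  qed
  then obtain t0 where t0: "\<not> letterA ((?F ^^ t0) z)" by blast
  have nzt: "\<And>t. (?F ^^ t) z \<noteq> (0,0)" using Fpow_nz[OF z] by blast
  obtain j where j: "letterA ((Am b ^^ j) ((?F ^^ t0) z))" using H nzt unfolding HB_def by blast
  have "\<exists>t. \<not> letterA ((?F ^^ t) z) \<and> letterA ((?F ^^ Suc t) z)"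
    using t0 j
  proof (induction j arbitrary: t0)
    case 0 then show ?case by simp
  next
    case (Suc j)
    have st: "(?F ^^ Suc t0) z = Am b ((?F ^^ t0) z)"
      using Suc.prems(1) nzt[of t0] by (simp add: Fmap_eq)
    show ?case
    proof (cases "letterA ((?F ^^ Suc t0) z)")
      case True then show ?thesis using Suc.prems(1) by blast
    next
      case False
      have "letterA ((Am b ^^ j) ((?F ^^ Suc t0) z))"
        using Suc.prems(2) st by (simp add: funpow_Suc_right del: funpow.simps)
      then show ?thesis using Suc.IH[OF False] by blast
    qed
  qed
  then obtain t where t: "\<not> letterA ((?F ^^ t) z)" "letterA ((?F ^^ Suc t) z)" by blast
  have "(?F ^^ Suc t) z = Am b ((?F ^^ t) z)" using t(1) nzt[of t] by (simp add: Fmap_eq)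
  then have "Ent ((?F ^^ Suc t) z)" using entry[OF t(1) nzt[of t]] t(2) by simp
  then show ?thesis by blast
qed

theorem main_lt2:
  assumes k: "k \<ge> 2" and H: "HB b" and L: "L > 0"
    and bnd: "\<And>y0. Ent y0 \<Longrightarrow> \<exists>C. \<forall>m. \<bar>(\<Sum>i<m. real (Nf b ((nxt b ^^ i) y0))) - real m * L\<bar> \<le> C"
    and z: "z \<noteq> (0,0)"
  shows "(\<lambda>n. real (cab (wordA (zeta k) b z) n) / real n) \<longlonglongrightarrow> 1 / (real k + L)"
    "(\<lambda>n. real (ca (wordA (zeta k) b z) n) / real n) \<longlonglongrightarrow> real k / (real k + L)"
proof -
  let ?F = "Fmap (zeta k) b"
  obtain e0 where e0: "Ent ((?F ^^ e0) z)" using first_entry[OF k H z] by blast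
  define y0 where "y0 = (?F ^^ e0) z"
  define N where "N i = Nf b ((nxt b ^^ i) y0)" for i
  define e where "e = rec_nat e0 (\<lambda>i ei. ei + k + N i)"
  have e0': "e 0 = e0" by (simp add: e_def)
  have eS: "e (Suc i) = e i + k + N i" for i by (simp add: e_def)
  have Ei: "Ent ((nxt b ^^ i) y0)" for i
    by (induction i) (auto simp: y0_def e0 intro: Nf_props(4)[OF H])
  have ze: "(?F ^^ e i) z = (nxt b ^^ i) y0" for i
  proof (induction i)
    case 0 then show ?case by (simp add: e0' y0_def)
  next
    case (Suc i)
    have "(?F ^^ e (Suc i)) z = (?F ^^ (k + N i)) ((?F ^^ e i) z)"
      by (simp add: eS funpow_add add.commute add.left_commute)
    also have "\<dots> = nxt b ((nxt b ^^ i) y0)"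
      unfolding Suc N_def using orbit_block(3)[OF k H Ei[of i]] by simp
    finally show ?case by simp
  qed
  have pt: "(?F ^^ (e i + j)) z = (?F ^^ j) ((nxt b ^^ i) y0)" for i j
    using ze[of i] by (simp add: funpow_add add.commute)
  obtain C where C: "\<forall>m. \<bar>(\<Sum>i<m. real (N i)) - real m * L\<bar> \<le> C"
    using bnd[OF e0[folded y0_def]] unfolding N_def by blast
  have k1: "k \<ge> 1" using k by simp
  have N1: "N i \<ge> 1" for i unfolding N_def by (rule Nf_props(1)[OF H Ei])
  have wa: "j < k \<Longrightarrow> wordA (zeta k) b z (e i + j)" for i j
    unfolding wordA_def pt using orbit_block(1)[OF k H Ei[of i]] by simp
  have wb: "k \<le> j \<Longrightarrow> j < k + N i \<Longrightarrow> \<not> wordA (zeta k) b z (e i + j)" for i j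
    unfolding wordA_def pt N_def using orbit_block(2)[OF k H Ei[of i]] by simp
  show "(\<lambda>n. real (cab (wordA (zeta k) b z) n) / real n) \<longlonglongrightarrow> 1 / (real k + L)"
    by (rule GB(1)[where e=e and N=N and k=k and w="wordA (zeta k) b z", OF k1 L eS N1 wa wb]) (use C in auto)
  show "(\<lambda>n. real (ca (wordA (zeta k) b z) n) / real n) \<longlonglongrightarrow> real k / (real k + L)"
    by (rule GB(2)[where e=e and N=N and k=k and w="wordA (zeta k) b z", OF k1 L eS N1 wa wb]) (use C in auto)
qed



lemma Nf_eq:
  assumes H: "HB b" and E: "Ent y"
    and nb: "\<And>i. i < j \<Longrightarrow> \<not> letterA ((Am b ^^ i) (negp y))"
    and la: "letterA ((Am b ^^ j) (negp y))"
  shows "Nf b y = j"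
  unfolding Nf_def
proof (rule Least_equality)
  show "letterA ((Am b ^^ j) (negp y))" by (rule la)
  fix i assume "letterA ((Am b ^^ i) (negp y))"
  then show "j \<le> i" using nb by (meson not_le)
qed

lemma Ent_neg_nl: "Ent y \<Longrightarrow> \<not> letterA (negp y)"
  using letter_neg[OF Ent_nz] Ent_letter by blast

lemma HB_hyp: "b \<le> -2 \<Longrightarrow> HB b"
  unfolding HB_def
proof (intro allI impI)
  fix w :: "real \<times> real" assume b: "b \<le> -2" and w: "w \<noteq> (0,0)"
  obtain x v where xv: "w = (x, v)" by (cases w)
  show "\<exists>j. letterA ((Am b ^^ j) w)"
  proof (cases "letterA w")
    case True then show ?thesis by (intro exI[of _ 0]) simp
  next
    case False
    then have nl: "x < 0 \<or> (x = 0 \<and> v > 0)" using w xv by (auto simp: letterA_def)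
    show ?thesis
    proof (cases "letterA (Am b w)")
      case True then show ?thesis by (intro exI[of _ 1]) simp
    next
      case False2: False
      then have x1: "b * x - v < 0"
        using nl xv by (auto simp: letterA_def Am_def)
      have "b * (b * x - v) - x > 0"
      proof -
        define X where "X = b * x - v"
        have X: "X < 0" using x1 by (simp add: X_def)
        have "b * X \<ge> -2 * X" using b X by (intro mult_right_mono_neg) auto
        then have "b * X > 0" using X by linarith
        moreover have "x \<le> 0" using nl by auto
        ultimately show ?thesis unfolding X_def[symmetric] by linarith
      qed
      then have "letterA (Am b (Am b w))" by (simp add: xv Am_def letterA_def)
      then show ?thesis by (intro exI[of _ 2]) (simp add: numeral_2_eq_2)
    qed
  qed
qed

definition Pq :: "real \<times> real \<Rightarrow> bool" where
  "Pq y \<longleftrightarrow> - snd y \<le> fst y"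

lemma hyp_step:
  assumes b: "b \<le> -2" and E: "Ent y"
  shows "Nf b y = 1 \<or> Nf b y = 2"
    "Pq y \<Longrightarrow> Nf b y = 1 \<and> Pq (nxt b y)"
    "Nf b y = 2 \<Longrightarrow> Pq (nxt b y)"
proof -
  have H: "HB b" by (rule HB_hyp[OF b])
  define p where "p = fst y"
  define q where "q = - snd y"
  have y: "y = (p, -q)" by (simp add: p_def q_def)
  have p: "p \<ge> 0" and q: "q > 0" using E y by (auto simp: Ent_def)
  have n0: "\<not> letterA ((Am b ^^ 0) (negp y))" using Ent_neg_nl[OF E] by simp
  have A1: "(Am b ^^ 1) (negp y) = (- b * p - q, - p)" by (simp add: y negp_def Am_def)
  have A2: "(Am b ^^ 2) (negp y) = (b * (- b * p - q) + p, - b * p - q)"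
    by (simp add: y negp_def Am_def numeral_2_eq_2)
  have case1: "Nf b y = 1 \<and> nxt b y = (- b * p - q, - p)" if l1: "letterA (- b * p - q, - p)"
  proof -
    have "Nf b y = 1"
      by (rule Nf_eq[OF H E]) (use n0 l1 A1 in auto)
    then show ?thesis using A1 by (simp add: nxt_def)
  qed
  have case2: "Nf b y = 2 \<and> nxt b y = (b * (- b * p - q) + p, - b * p - q) \<and> - b * p - q < 0"
    if l1: "\<not> letterA (- b * p - q, - p)"
  proof -
    have x1: "- b * p - q < 0"
      using l1 p q by (cases "p = 0") (auto simp: letterA_def)
    define X where "X = - b * p - q"
    have X: "X < 0" using x1 by (simp add: X_def)
    have "b * X \<ge> -2 * X" using b X by (intro mult_right_mono_neg) auto
    then have "b * X > 0" using X by linarith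
    then have "b * (- b * p - q) + p > 0" using p unfolding X_def[symmetric] by linarith
    then have l2: "letterA (b * (- b * p - q) + p, - b * p - q)" by (simp add: letterA_def)
    have "Nf b y = 2"
    proof (rule Nf_eq[OF H E])
      fix i :: nat assume "i < 2"
      then have "i = 0 \<or> i = 1" by auto
      then show "\<not> letterA ((Am b ^^ i) (negp y))" using n0 l1 A1 by auto
    qed (use l2 A2 in simp)
    then show ?thesis using A2 x1 by (simp add: nxt_def)
  qed
  show "Nf b y = 1 \<or> Nf b y = 2" using case1 case2 by blast
  show "Pq y \<Longrightarrow> Nf b y = 1 \<and> Pq (nxt b y)"
  proof -
    assume P: "Pq y"
    then have qp: "q \<le> p" by (simp add: Pq_def y)
    have "2 * p \<le> (- b) * p" using b p by (intro mult_right_mono) auto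
    then have "- b * p \<ge> 2 * p" by simp
    then have pos: "- b * p - q \<ge> p" using qp by linarith
    then have "letterA (- b * p - q, - p)" using q qp by (simp add: letterA_def)
    then show ?thesis using case1 pos by (simp add: Pq_def)
  qed
  show "Nf b y = 2 \<Longrightarrow> Pq (nxt b y)"
  proof -
    assume N2: "Nf b y = 2"
    then have l1: "\<not> letterA (- b * p - q, - p)" using case1 by auto
    from case2[OF l1] have nx: "nxt b y = (b * (- b * p - q) + p, - b * p - q)" and x1: "- b * p - q < 0" by auto
    have "b * (- b * p - q) \<ge> -2 * (- b * p - q)" using b x1 by (intro mult_right_mono_neg) auto
    then show ?thesis using nx x1 p by (simp add: Pq_def)
  qed
qed

lemma hyp_bound:
  assumes b: "b \<le> -2" and E: "Ent y0"
  shows "\<exists>C. \<forall>m. \<bar>(\<Sum>i<m. real (Nf b ((nxt b ^^ i) y0))) - real m * 1\<bar> \<le> C"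
proof -
  have H: "HB b" by (rule HB_hyp[OF b])
  define s where "s i = (nxt b ^^ i) y0" for i
  have Es: "Ent (s i)" for i unfolding s_def
    by (induction i) (auto simp: E intro: Nf_props(4)[OF H])
  have sS: "s (Suc i) = nxt b (s i)" for i by (simp add: s_def)
  have lo: "(\<Sum>i<m. real (Nf b (s i))) \<ge> real m" for m
  proof -
    have "(\<Sum>i<m. real (Nf b (s i))) \<ge> (\<Sum>i<m. 1)"
      by (rule sum_mono) (use Nf_props(1)[OF H Es] in auto)
    then show ?thesis by simp
  qed
  have hi: "(\<Sum>i<m. real (Nf b (s i))) \<le> real m + (if Pq (s m) then 1 else 0)" for m
  proof (induction m)
    case 0 then show ?case by simp
  next
    case (Suc m)
    show ?case
    proof (cases "Pq (s m)")
      case True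
      then have "Nf b (s m) = 1" "Pq (s (Suc m))" using hyp_step(2)[OF b Es] sS by auto
      then show ?thesis using Suc True by simp
    next
      case False
      have "Nf b (s m) = 1 \<or> (Nf b (s m) = 2 \<and> Pq (s (Suc m)))"
        using hyp_step(1,3)[OF b Es] sS by auto
      then show ?thesis using Suc False by auto
    qed
  qed
  have "\<bar>(\<Sum>i<m. real (Nf b (s i))) - real m * 1\<bar> \<le> 1" for m
    using lo[of m] hi[of m] by (auto split: if_splits)
  then show ?thesis unfolding s_def by blast
qed



definition Pp :: "real \<Rightarrow> real \<Rightarrow> real \<Rightarrow> real \<times> real" where
  "Pp be R ph = (R * cos ph, R * cos (ph - be))"

lemma AmP: "b = 2 * cos be \<Longrightarrow> Am b (Pp be R ph) = Pp be R (ph + be)"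
  by (simp add: Pp_def Am_def cos_add cos_diff algebra_simps)

lemma AmPpow: "b = 2 * cos be \<Longrightarrow> (Am b ^^ j) (Pp be R ph) = Pp be R (ph + real j * be)"
  by (induction j) (simp_all add: AmP algebra_simps)

lemma negP: "negp (Pp be R ph) = Pp be R (ph - pi)"
proof -
  have "cos (ph - pi - be) = - cos (ph - be)" by (simp add: cos_diff sin_diff)
  then show ?thesis by (simp add: Pp_def negp_def)
qed

lemma letterP: "R > 0 \<Longrightarrow> letterA (Pp be R ph) \<longleftrightarrow> cos ph > 0 \<or> (cos ph = 0 \<and> cos (ph - be) < 0)"
  by (auto simp: Pp_def letterA_def zero_less_mult_iff mult_less_0_iff)

lemma T1: "pi/2 < t \<Longrightarrow> t < 3*pi/2 \<Longrightarrow> cos t < 0"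
proof -
  assume "pi/2 < t" "t < 3*pi/2"
  then have "0 < cos (t - pi)" by (intro cos_gt_zero_pi) auto
  then show ?thesis by simp
qed

lemma T2: "3*pi/2 < t \<Longrightarrow> t < 5*pi/2 \<Longrightarrow> cos t > 0"
proof -
  assume "3*pi/2 < t" "t < 5*pi/2"
  then have "0 < cos (t - 2*pi)" by (intro cos_gt_zero_pi) auto
  moreover have "cos (t - 2*pi) = cos t" using cos_periodic[of "t - 2*pi"] by simp
  ultimately show ?thesis by simp
qed

lemma cosper: "cos (y + 2 * pi * of_int n) = cos y"
  by (simp add: cos_add)

lemma exj_gt:
  assumes be: "be > 0" and xc: "x \<le> c"
  shows "\<exists>j::nat. c < x + real j * be \<and> x + real j * be \<le> c + be"
proof -
  define f where "f = \<lfloor>(c - x) / be\<rfloor>"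
  have f0: "f \<ge> 0" using be xc by (simp add: f_def)
  define j where "j = nat (f + 1)"
  have rj: "real j = real_of_int f + 1" using f0 by (simp add: j_def)
  have "real_of_int f \<le> (c - x) / be" "(c - x) / be < real_of_int f + 1"
    unfolding f_def by linarith+
  then have "real_of_int f * be \<le> c - x" "c - x < (real_of_int f + 1) * be"
    using be by (simp_all add: field_simps)
  then show ?thesis using rj by (intro exI[of _ j]) (auto simp: algebra_simps)
qed

lemma exj_ge:
  assumes be: "be > 0" and xc: "x < c"
  shows "\<exists>j::nat. j \<ge> 1 \<and> c \<le> x + real j * be \<and> x + (real j - 1) * be < c"
proof -
  define f where "f = \<lceil>(c - x) / be\<rceil>"
  have f0: "f \<ge> 1" using be xc by (simp add: f_def)
  define j where "j = nat f"
  have rj: "real j = real_of_int f" using f0 by (simp add: j_def)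
  have "(c - x) / be \<le> real_of_int f" "real_of_int f - 1 < (c - x) / be"
    unfolding f_def by linarith+
  then have "c - x \<le> real_of_int f * be" "(real_of_int f - 1) * be < c - x"
    using be by (simp_all add: field_simps)
  moreover have "j \<ge> 1" using f0 by (simp add: j_def)
  ultimately show ?thesis using rj by (intro exI[of _ j]) (auto simp: algebra_simps)
qed

lemma polar:
  assumes be: "0 < be" "be < pi" and w: "w \<noteq> (0,0)"
  shows "\<exists>R ph. R > 0 \<and> w = Pp be R ph"
proof -
  obtain x v where xv: "w = (x, v)" by (cases w)
  have s: "sin be > 0" using be by (intro sin_gt_zero) auto
  define q where "q = (v - x * cos be) / sin be"
  define R where "R = sqrt (x^2 + q^2)"
  have nz: "x \<noteq> 0 \<or> q \<noteq> 0" using w xv s by (auto simp: q_def)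
  have pos: "x^2 + q^2 > 0"
  proof (cases "x = 0")
    case True then have "q^2 > 0" using nz by simp
    then show ?thesis using True by simp
  next
    case False then have "x^2 > 0" by simp
    then show ?thesis by (simp add: add_pos_nonneg)
  qed
  have R: "R > 0" using pos by (simp add: R_def)
  have R2: "R^2 = x^2 + q^2" using pos by (simp add: R_def)
  have "(x / R)^2 + (q / R)^2 = (x^2 + q^2) / R^2" by (simp add: power_divide add_divide_distrib)
  then have "(x / R)^2 + (q / R)^2 = 1" using R2 pos nz by simp
  then obtain t where t: "x / R = cos t" "q / R = sin t" by (rule sincos_total_2pi)
  have "x = R * cos t" "q = R * sin t" using t R by (simp_all add: field_simps)
  moreover have "v = x * cos be + q * sin be" using s by (simp add: q_def)
  ultimately have "w = Pp be R t" using xv by (simp add: Pp_def cos_diff algebra_simps)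
  then show ?thesis using R by blast
qed

lemma normalize:
  assumes be: "0 < be" "be < pi" and c1: "cos ph \<le> 0" and c2: "cos (ph - be) > 0"
  shows "\<exists>ph'. pi/2 \<le> ph' \<and> ph' < pi/2 + be \<and> cos ph' = cos ph \<and> cos (ph' - be) = cos (ph - be)"
proof -
  define n where "n = \<lfloor>(ph - pi/2) / (2*pi)\<rfloor>"
  define p1 where "p1 = ph - 2 * pi * real_of_int n"
  have "real_of_int n \<le> (ph - pi/2) / (2*pi)" "(ph - pi/2) / (2*pi) < real_of_int n + 1"
    unfolding n_def by linarith+
  then have "real_of_int n * (2*pi) \<le> ph - pi/2" "ph - pi/2 < (real_of_int n + 1) * (2*pi)"
    using pi_gt_zero by (simp_all add: field_simps)
  then have r: "pi/2 \<le> p1" "p1 < 5*pi/2" unfolding p1_def by (auto simp: algebra_simps)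
  have e1: "cos p1 = cos ph" using cosper[of p1 n] by (simp add: p1_def)
  have e2: "cos (p1 - be) = cos (ph - be)" using cosper[of "p1 - be" n] by (simp add: p1_def algebra_simps)
  have u: "p1 \<le> 3*pi/2"
  proof (rule ccontr)
    assume "\<not> p1 \<le> 3*pi/2"
    then have "cos p1 > 0" using r by (intro T2) auto
    then show False using e1 c1 by simp
  qed
  have l: "p1 < pi/2 + be"
  proof (rule ccontr)
    assume a: "\<not> p1 < pi/2 + be"
    have "cos (p1 - be) \<le> 0"
    proof (cases "p1 - be = pi/2")
      case True then show ?thesis unfolding True by simp
    next
      case False
      then have "cos (p1 - be) < 0" using a u be by (intro T1) auto
      then show ?thesis by simp
    qed
    then show False using e2 c2 by simp
  qed
  show ?thesis using r l e1 e2 by blast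
qed

context
  fixes b be :: real
  assumes be: "0 < be" "be < pi" and bb: "b = 2 * cos be"
begin

lemma HB_ell: "HB b"
  unfolding HB_def
proof (intro allI impI)
  fix w :: "real \<times> real" assume w: "w \<noteq> (0,0)"
  obtain R ph where R: "R > 0" and wP: "w = Pp be R ph" using polar[OF be w] by blast
  define n where "n = \<lfloor>ph / (2*pi)\<rfloor>"
  define x where "x = ph - 2 * pi * real_of_int n"
  have "real_of_int n \<le> ph / (2*pi)" "ph / (2*pi) < real_of_int n + 1"
    unfolding n_def by linarith+
  then have "real_of_int n * (2*pi) \<le> ph" "ph < (real_of_int n + 1) * (2*pi)"
    using pi_gt_zero by (simp_all add: field_simps)
  then have r: "0 \<le> x" "x < 2*pi" unfolding x_def by (auto simp: algebra_simps)
  have "\<exists>j::nat. cos (x + real j * be) > 0"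
  proof (cases "x > 3*pi/2")
    case True
    then have "cos (x + real 0 * be) > 0" using r by (intro T2) auto
    then show ?thesis by blast
  next
    case False
    then obtain j :: nat where j: "3*pi/2 < x + real j * be" "x + real j * be \<le> 3*pi/2 + be"
      using exj_gt[OF be(1), of x "3*pi/2"] by auto
    then have "cos (x + real j * be) > 0" using be by (intro T2) auto
    then show ?thesis by blast
  qed
  then obtain j :: nat where j: "cos (x + real j * be) > 0" by blast
  have "cos (ph + real j * be) = cos (x + real j * be)"
    using cosper[of "x + real j * be" n] by (simp add: x_def algebra_simps)
  then have "letterA (Pp be R (ph + real j * be))" using j R by (simp add: letterP)
  then show "\<exists>j. letterA ((Am b ^^ j) w)" using AmPpow[OF bb] wP by metis
qed

lemma ell_block:
  assumes R: "R > 0" and E: "Ent y" and yP: "negp y = Pp be R ph"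
    and ph: "pi/2 \<le> ph" "ph < pi/2 + be"
  shows "\<exists>N. Nf b y = N \<and> negp (nxt b y) = Pp be R (ph + real N * be - pi)
     \<and> pi/2 \<le> ph + real N * be - pi \<and> ph + real N * be - pi < pi/2 + be"
proof -
  have "ph < 3*pi/2" using ph be by simp
  then obtain N :: nat where N: "N \<ge> 1" "3*pi/2 \<le> ph + real N * be" "ph + (real N - 1) * be < 3*pi/2"
    using exj_ge[OF be(1)] by blast
  have sb: "sin be > 0" using be by (intro sin_gt_zero) auto
  have nb: "\<not> letterA ((Am b ^^ i) (negp y))" if i: "i < N" for i
  proof -
    have "real i \<le> real N - 1" using i by linarith
    then have "real i * be \<le> (real N - 1) * be" using be by (intro mult_right_mono) auto
    moreover have "real i * be \<ge> 0" using be by simp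
    moreover have "(real N - 1) * be = real N * be - be" by (simp add: algebra_simps)
    ultimately have t: "pi/2 \<le> ph + real i * be" "ph + real i * be < 3*pi/2"
      using N ph be by linarith+
    show ?thesis
    proof (cases "ph + real i * be = pi/2")
      case True
      have "cos (pi/2 - be) = sin be" by (simp add: cos_diff)
      then have "cos (ph + real i * be) = 0" "cos (ph + real i * be - be) > 0"
        using sb unfolding True by simp_all
      then show ?thesis using R by (simp add: yP AmPpow[OF bb] letterP)
    next
      case False
      then have "cos (ph + real i * be) < 0" using t by (intro T1) auto
      then show ?thesis using R by (simp add: yP AmPpow[OF bb] letterP)
    qed
  qed
  have la: "letterA ((Am b ^^ N) (negp y))"
  proof -
    have u: "ph + real N * be < 5*pi/2" using N(3) be by (simp add: algebra_simps)
    show ?thesis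
    proof (cases "ph + real N * be = 3*pi/2")
      case True
      have e: "3*pi/2 = 3/2*pi" by simp
      have c3: "cos (3*pi/2) = 0" unfolding e by (rule cos_3over2_pi)
      have s3: "sin (3*pi/2) = -1" unfolding e by (rule sin_3over2_pi)
      have "cos (3*pi/2 - be) = - sin be" by (simp add: cos_diff c3 s3)
      then have "cos (3*pi/2 - be) < 0" using sb by simp
      then have "cos (ph + real N * be) = 0" "cos (ph + real N * be - be) < 0"
        unfolding True using c3 by simp_all
      then show ?thesis using R by (simp add: yP AmPpow[OF bb] letterP)
    next
      case False
      then have "cos (ph + real N * be) > 0" using N(2) u by (intro T2) auto
      then show ?thesis using R by (simp add: yP AmPpow[OF bb] letterP)
    qed
  qed
  have NfN: "Nf b y = N" unfolding Nf_def
  proof (rule Least_equality)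
    show "letterA ((Am b ^^ N) (negp y))" by (rule la)
    fix i assume "letterA ((Am b ^^ i) (negp y))"
    then show "N \<le> i" using nb by (meson not_le)
  qed
  have "negp (nxt b y) = Pp be R (ph + real N * be - pi)"
    by (simp add: nxt_def NfN yP AmPpow[OF bb] negP)
  moreover have "pi/2 \<le> ph + real N * be - pi" "ph + real N * be - pi < pi/2 + be"
    using N ph by (auto simp: algebra_simps)
  ultimately show ?thesis using NfN by blast
qed

lemma ell_bound:
  assumes E: "Ent y0"
  shows "\<exists>C. \<forall>m. \<bar>(\<Sum>i<m. real (Nf b ((nxt b ^^ i) y0))) - real m * (pi / be)\<bar> \<le> C"
proof -
  have H: "HB b" by (rule HB_ell)
  define s where "s i = (nxt b ^^ i) y0" for i
  have Es: "Ent (s i)" for i unfolding s_def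
    by (induction i) (auto simp: E intro: Nf_props(4)[OF H])
  have sS: "s (Suc i) = nxt b (s i)" for i by (simp add: s_def)
  have nz: "negp y0 \<noteq> (0,0)" by (rule negp_nz[OF Ent_nz[OF E]])
  obtain R ph where R: "R > 0" and P: "negp y0 = Pp be R ph" using polar[OF be nz] by blast
  have "R * cos ph \<le> 0" "R * cos (ph - be) > 0" using E P
    by (auto simp: Ent_def negp_def Pp_def)
  then have "cos ph \<le> 0" "cos (ph - be) > 0" using R
    by (auto simp: zero_less_mult_iff mult_le_0_iff)
  then obtain ph0 where ph0: "pi/2 \<le> ph0" "ph0 < pi/2 + be" "cos ph0 = cos ph" "cos (ph0 - be) = cos (ph - be)"
    using normalize[OF be] by blast
  have P0: "negp (s 0) = Pp be R ph0" using P ph0 by (simp add: s_def Pp_def)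
  have ind: "\<exists>ph. pi/2 \<le> ph \<and> ph < pi/2 + be \<and> negp (s m) = Pp be R ph \<and>
     (\<Sum>i<m. real (Nf b (s i))) * be = ph - ph0 + real m * pi" for m
  proof (induction m)
    case 0 then show ?case using P0 ph0 by auto
  next
    case (Suc m)
    then obtain ph where ph: "pi/2 \<le> ph" "ph < pi/2 + be" "negp (s m) = Pp be R ph"
      "(\<Sum>i<m. real (Nf b (s i))) * be = ph - ph0 + real m * pi" by blast
    obtain N where N: "Nf b (s m) = N" "negp (nxt b (s m)) = Pp be R (ph + real N * be - pi)"
      "pi/2 \<le> ph + real N * be - pi" "ph + real N * be - pi < pi/2 + be"
      using ell_block[OF R Es ph(3) ph(1) ph(2)] by blast
    have "(\<Sum>i<Suc m. real (Nf b (s i))) * be = (ph + real N * be - pi) - ph0 + real (Suc m) * pi"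
      using ph(4) N(1) by (simp add: algebra_simps)
    then show ?case using N sS by metis
  qed
  have "\<bar>(\<Sum>i<m. real (Nf b (s i))) - real m * (pi / be)\<bar> \<le> 1" for m
  proof -
    obtain ph where ph: "pi/2 \<le> ph" "ph < pi/2 + be"
      "(\<Sum>i<m. real (Nf b (s i))) * be = ph - ph0 + real m * pi" using ind by blast
    have "(\<Sum>i<m. real (Nf b (s i))) - real m * (pi / be) = (ph - ph0) / be"
      using ph(3) be by (simp add: field_simps)
    moreover have "\<bar>ph - ph0\<bar> \<le> be" using ph ph0 by auto
    ultimately show ?thesis using be by (simp add: abs_divide)
  qed
  then show ?thesis unfolding s_def by blast
qed

end



definition Inv :: "real \<times> real \<Rightarrow> bool" where
  "Inv w \<longleftrightarrow> fst w \<le> 0 \<and> fst w \<le> snd w \<and> w \<noteq> (0,0)"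

lemma Inv_nl: "Inv w \<Longrightarrow> \<not> letterA w"
  by (cases w) (auto simp: Inv_def letterA_def)

lemma Inv_step: "b \<ge> 2 \<Longrightarrow> Inv w \<Longrightarrow> Inv (Am b w)"
proof -
  assume b: "b \<ge> 2" and I: "Inv w"
  obtain x y where w: "w = (x, y)" by (cases w)
  have x: "x \<le> 0" "x \<le> y" using I w by (auto simp: Inv_def)
  have "b * x \<le> 2 * x" using b x by (intro mult_right_mono_neg) auto
  then have "b * x - y \<le> x" using x by linarith
  moreover have "Am b w \<noteq> (0,0)" using I by (intro Am_nz) (auto simp: Inv_def)
  ultimately show ?thesis using x w by (simp add: Inv_def Am_def)
qed

lemma Inv_orbit: "b \<ge> 2 \<Longrightarrow> Inv w \<Longrightarrow> Inv ((Fmap a b ^^ j) w)"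
proof (induction j)
  case 0 then show ?case by simp
next
  case (Suc j)
  then have I: "Inv ((Fmap a b ^^ j) w)" by simp
  then have "(Fmap a b ^^ Suc j) w = Am b ((Fmap a b ^^ j) w)"
    using Inv_nl[OF I] by (simp add: Fmap_eq Inv_def)
  then show ?case using Inv_step[OF Suc.prems(1) I] by simp
qed

lemma Ablock_orbit:
  assumes k: "k \<ge> 2" and E: "Ent y"
  shows "(Fmap (zeta k) b ^^ k) y = negp y"
proof -
  let ?F = "Fmap (zeta k) b"
  have nz: "y \<noteq> (0,0)" by (rule Ent_nz[OF E])
  have A: "j \<le> k \<Longrightarrow> (?F ^^ j) y = (Am (zeta k) ^^ j) y" for j
  proof (induction j)
    case 0 then show ?case by simp
  next
    case (Suc j)
    then have eq: "(?F ^^ j) y = (Am (zeta k) ^^ j) y" by simp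
    have "letterA ((Am (zeta k) ^^ j) y)" using Ablock_letters[OF k E] Suc by simp
    moreover have "(Am (zeta k) ^^ j) y \<noteq> (0,0)" by (rule Ampow_nz[OF nz])
    ultimately show ?case using eq by (simp add: Fmap_eq)
  qed
  show ?thesis using A[of k] Apow_k[OF k] by simp
qed

lemma bounded_lim: "(\<And>n. \<bar>f n\<bar> \<le> D) \<Longrightarrow> (\<lambda>n. f n / real n) \<longlonglongrightarrow> 0"
  using lim_from_bound[of 1 0 f 0 D] by simp

lemma big_theta:
  assumes b: "b \<ge> 2" and z: "z \<noteq> (0,0)"
  shows "(\<lambda>n. real (cab (wordA a b z) n) / real n) \<longlonglongrightarrow> 0"
proof -
  let ?F = "Fmap a b"
  let ?w = "wordA a b z"
  have after: "\<not> ?w t'" if t: "?w t" "\<not> ?w (t+1)" "t + 1 \<le> t'" for t t'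
  proof -
    obtain x y where xy: "(?F ^^ t) z = (x, y)" by (cases "(?F ^^ t) z")
    have la: "letterA (x, y)" using t(1) xy by (simp add: wordA_def)
    have nz: "(x, y) \<noteq> (0,0)" using Fpow_nz[OF z, where a=a and b=b and t=t] xy by simp
    have st: "(?F ^^ (t+1)) z = Am a (x, y)" using xy la nz by (simp add: Fmap_eq)
    have x: "x \<ge> 0" using la by (auto simp: letterA_def)
    have "\<not> letterA (Am a (x, y))" using t(2) st by (simp add: wordA_def)
    then have "a * x - y \<le> 0" by (auto simp: Am_def letterA_def)
    moreover have "Am a (x,y) \<noteq> (0,0)" by (rule Am_nz[OF nz])
    ultimately have I: "Inv ((?F ^^ (t+1)) z)" using st x by (auto simp: Inv_def Am_def)
    obtain d where d: "t' = d + (t + 1)" using t(3) by (metis add.commute le_Suc_ex)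
    have "(?F ^^ t') z = (?F ^^ d) ((?F ^^ (t+1)) z)" by (simp only: d funpow_add comp_apply)
    then show ?thesis using Inv_nl[OF Inv_orbit[OF b I]] by (simp add: wordA_def)
  qed
  have "cab ?w n \<le> 1" for n
    unfolding cab_def
  proof (subst One_nat_def, subst card_le_Suc0_iff_eq)
    show "finite {t. t + 1 < n \<and> ?w t \<and> \<not> ?w (t + 1)}"
      by (rule finite_subset[of _ "{..<n}"]) auto
    show "\<forall>x\<in>{t. t + 1 < n \<and> ?w t \<and> \<not> ?w (t + 1)}. \<forall>y\<in>{t. t + 1 < n \<and> ?w t \<and> \<not> ?w (t + 1)}. x = y"
    proof (intro ballI)
      fix x y assume xs: "x \<in> {t. t + 1 < n \<and> ?w t \<and> \<not> ?w (t + 1)}" and ys: "y \<in> {t. t + 1 < n \<and> ?w t \<and> \<not> ?w (t + 1)}"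
      show "x = y"
      proof (rule ccontr)
        assume "x \<noteq> y"
        then have "x < y \<or> y < x" by auto
        then show False
        proof
          assume "x < y" then show False using after[of x y] xs ys by auto
        next
          assume "y < x" then show False using after[of y x] xs ys by auto
        qed
      qed
    qed
  qed
  then have "\<bar>real (cab ?w n)\<bar> \<le> 1" for n by simp
  then show ?thesis by (rule bounded_lim)
qed

lemma big_rho:
  assumes k: "k \<ge> 2" and b: "b \<ge> 2"
  shows "rho_seq (zeta k) b \<longlonglongrightarrow> 0"
proof -
  let ?F = "Fmap (zeta k) b"
  have I1: "Inv (0, 1)" by (simp add: Inv_def)
  have c1: "count_a (zeta k) b (0,1) n = 0" for n
  proof -
    have "\<not> wordA (zeta k) b (0,1) t" for t
      using Inv_nl[OF Inv_orbit[OF b I1]] by (simp add: wordA_def)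
    then show ?thesis by (simp add: count_a_def)
  qed
  have E: "Ent (0, -1)" by (simp add: Ent_def)
  have Fk: "(?F ^^ k) (0, -1) = (0, 1)" using Ablock_orbit[OF k E] by (simp add: negp_def)
  have nb: "\<not> wordA (zeta k) b (0,-1) t" if t: "t \<ge> k" for t
  proof -
    obtain d where d: "t = d + k" using t by (metis add.commute le_Suc_ex)
    have "(?F ^^ t) (0,-1) = (?F ^^ d) (0, 1)" using Fk by (simp add: d funpow_add)
    then show ?thesis using Inv_nl[OF Inv_orbit[OF b I1]] by (simp add: wordA_def)
  qed
  have c2: "count_a (zeta k) b (0,-1) n \<le> k" for n
  proof -
    have "{t. t < n \<and> wordA (zeta k) b (0,-1) t} \<subseteq> {..<k}" using nb by (auto simp: not_le[symmetric])
    then show ?thesis unfolding count_a_def using card_mono[of "{..<k}"] by fastforce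
  qed
  have "\<bar>real (count_a (zeta k) b (0,1) n) + real (count_a (zeta k) b (0,-1) n)\<bar> \<le> real k" for n
    using c1[of n] c2[of n] by simp
  then have "(\<lambda>n. (real (count_a (zeta k) b (0,1) n) + real (count_a (zeta k) b (0,-1) n)) / real n) \<longlonglongrightarrow> 0"
    by (rule bounded_lim)
  then have "(\<lambda>n. (real (count_a (zeta k) b (0,1) n) + real (count_a (zeta k) b (0,-1) n)) / real n / 2) \<longlonglongrightarrow> 0 / 2"
    by (intro tendsto_divide tendsto_const) auto
  moreover have "rho_seq (zeta k) b = (\<lambda>n. (real (count_a (zeta k) b (0,1) n) + real (count_a (zeta k) b (0,-1) n)) / real n / 2)"
    by (rule ext) (simp add: rho_seq_def)
  ultimately show ?thesis by simp
qed



lemma theta_eq: "theta_seq a b z = (\<lambda>n. real (cab (wordA a b z) n) / real n)"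
  by (rule ext) (simp add: theta_seq_def count_ab_def cab_def)

lemma rho_eq: "rho_seq a b = (\<lambda>n. (real (ca (wordA a b (0,1)) n) / real n + real (ca (wordA a b (0,-1)) n) / real n) / 2)"
  by (rule ext) (simp add: rho_seq_def count_a_def ca_def add_divide_distrib)

lemma gen_lt2:
  assumes k: "k \<ge> 2" and H: "HB b" and L: "L > 0"
    and bnd: "\<And>y0. Ent y0 \<Longrightarrow> \<exists>C. \<forall>m. \<bar>(\<Sum>i<m. real (Nf b ((nxt b ^^ i) y0))) - real m * L\<bar> \<le> C"
  shows "(\<forall>z. z \<noteq> (0,0) \<longrightarrow> theta_seq (zeta k) b z \<longlonglongrightarrow> 1 / (real k + L)) \<and>
     rho_seq (zeta k) b \<longlonglongrightarrow> real k * (1 / (real k + L))"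
proof
  show "\<forall>z. z \<noteq> (0,0) \<longrightarrow> theta_seq (zeta k) b z \<longlonglongrightarrow> 1 / (real k + L)"
    using main_lt2(1)[OF k H L bnd] by (simp add: theta_eq)
  have c1: "(\<lambda>n. real (ca (wordA (zeta k) b (0,1)) n) / real n) \<longlonglongrightarrow> real k / (real k + L)"
    by (rule main_lt2(2)[OF k H L bnd]) auto
  have c2: "(\<lambda>n. real (ca (wordA (zeta k) b (0,-1)) n) / real n) \<longlonglongrightarrow> real k / (real k + L)"
    by (rule main_lt2(2)[OF k H L bnd]) auto
  have lim: "rho_seq (zeta k) b \<longlonglongrightarrow> (real k / (real k + L) + real k / (real k + L)) / 2"
    unfolding rho_eq by (intro tendsto_divide tendsto_add c1 c2 tendsto_const) auto
  have h: "(x + x) / 2 = x" for x :: real by simp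
  have e1: "(real k / (real k + L) + real k / (real k + L)) / 2 = real k / (real k + L)" by (rule h)
  have e2: "real k / (real k + L) = real k * (1 / (real k + L))" by simp
  from lim have "rho_seq (zeta k) b \<longlonglongrightarrow> real k / (real k + L)" by (simp only: e1)
  then show "rho_seq (zeta k) b \<longlonglongrightarrow> real k * (1 / (real k + L))" by (simp only: e2)
qed

lemma part1:
  assumes k: "k \<ge> 2"
  shows "(\<forall>z. z \<noteq> (0,0) \<longrightarrow> theta_seq (zeta k) b z \<longlonglongrightarrow> theta_formula k b) \<and>
     rho_seq (zeta k) b \<longlonglongrightarrow> real k * theta_formula k b"
proof -
  consider "b \<ge> 2" | "-2 < b \<and> b < 2" | "b \<le> -2" by linarith
  then show ?thesis
  proof cases
    case 1
    have tf: "theta_formula k b = 0"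
    proof (cases "b = 2")
      case True then show ?thesis by (simp add: theta_formula_def)
    next
      case False then show ?thesis using 1 by (simp add: theta_formula_def)
    qed
    show ?thesis using big_theta[OF 1] big_rho[OF k 1] by (simp add: tf theta_eq)
  next
    case 2
    define be where "be = arccos (b / 2)"
    have be: "0 < be" "be < pi" using arccos_lt_bounded[of "b/2"] 2 by (auto simp: be_def)
    have bb: "b = 2 * cos be" using 2 by (simp add: be_def)
    have ab: "\<not> b > 2" "\<bar>b\<bar> \<le> 2" using 2 by auto
    have tf: "theta_formula k b = 1 / (real k + pi / be)"
      using ab be by (simp add: theta_formula_def be_def[symmetric] field_simps)
    have "pi / be > 0" using be by simp
    from gen_lt2[OF k HB_ell[OF be bb] this ell_bound[OF be bb]]
    show ?thesis by (simp add: tf)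
  next
    case 3
    have tf: "theta_formula k b = 1 / (real k + 1)"
    proof (cases "b = -2")
      case True
      have "pi + pi * real k > 0" by (simp add: add_pos_nonneg)
      then show ?thesis using True by (simp add: theta_formula_def field_simps)
    next
      case False then show ?thesis using 3 by (simp add: theta_formula_def)
    qed
    from gen_lt2[OF k HB_hyp[OF 3] _ hyp_bound[OF 3]]
    show ?thesis by (simp add: tf)
  qed
qed

lemma word_neg: "z \<noteq> (0,0) \<Longrightarrow> wordA a b z = (\<lambda>t. \<not> wordA b a (negp z) t)"
proof (rule ext)
  fix t assume z: "z \<noteq> (0,0)"
  have "(Fmap a b ^^ t) z = (Fmap a b ^^ t) (negp (negp z))" by simp
  also have "\<dots> = negp ((Fmap b a ^^ t) (negp z))" by (rule Fpow_neg)
  finally have e: "(Fmap a b ^^ t) z = negp ((Fmap b a ^^ t) (negp z))" .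
  have "(Fmap b a ^^ t) (negp z) \<noteq> (0,0)" by (rule Fpow_nz[OF negp_nz[OF z]])
  then show "wordA a b z t = (\<not> wordA b a (negp z) t)"
    unfolding wordA_def e by (rule letter_neg)
qed

lemma part2:
  assumes l: "l \<ge> 2"
  shows "(\<forall>z. z \<noteq> (0,0) \<longrightarrow> theta_seq a (zeta l) z \<longlonglongrightarrow> theta_formula l a) \<and>
     rho_seq a (zeta l) \<longlonglongrightarrow> 1 - real l * theta_formula l a"
proof -
  note P = part1[OF l, of a]
  have th: "theta_seq a (zeta l) z \<longlonglongrightarrow> theta_formula l a" if z: "z \<noteq> (0,0)" for z
  proof -
    let ?w = "wordA (zeta l) a (negp z)"
    have "theta_seq (zeta l) a (negp z) \<longlonglongrightarrow> theta_formula l a"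
      using P negp_nz[OF z] by blast
    then have t1: "(\<lambda>n. real (cab ?w n) / real n) \<longlonglongrightarrow> theta_formula l a"
      by (simp add: theta_eq)
    have t2: "(\<lambda>n. (real (cab (\<lambda>t. \<not> ?w t) n) - real (cab ?w n)) / real n) \<longlonglongrightarrow> 0"
      by (rule bounded_lim[OF cab_not_diff])
    have "(\<lambda>n. (real (cab (\<lambda>t. \<not> ?w t) n) - real (cab ?w n)) / real n + real (cab ?w n) / real n)
        \<longlonglongrightarrow> 0 + theta_formula l a"
      by (rule tendsto_add[OF t2 t1])
    moreover have "(\<lambda>n. (real (cab (\<lambda>t. \<not> ?w t) n) - real (cab ?w n)) / real n + real (cab ?w n) / real n)
       = theta_seq a (zeta l) z"
      unfolding theta_eq word_neg[OF z] by (rule ext) (simp add: diff_divide_distrib)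
    ultimately show ?thesis by simp
  qed
  have rh: "rho_seq a (zeta l) \<longlonglongrightarrow> 1 - real l * theta_formula l a"
  proof -
    have r1: "(\<lambda>n. 1 - rho_seq (zeta l) a n) \<longlonglongrightarrow> 1 - real l * theta_formula l a"
      using P by (intro tendsto_diff tendsto_const) auto
    have n1: "negp (0, 1) = (0, -1)" "negp (0, -1) = (0, 1)" by (simp_all add: negp_def)
    have ev: "eventually (\<lambda>n. 1 - rho_seq (zeta l) a n = rho_seq a (zeta l) n) sequentially"
    proof (rule eventually_sequentiallyI[of 1])
      fix n :: nat assume n: "1 \<le> n"
      have a1: "real (ca (wordA a (zeta l) (0,1)) n) = real n - real (ca (wordA (zeta l) a (0,-1)) n)"
        using word_neg[of "(0,1)" a "zeta l"] n1 ca_not by simp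
      have a2: "real (ca (wordA a (zeta l) (0,-1)) n) = real n - real (ca (wordA (zeta l) a (0,1)) n)"
        using word_neg[of "(0,-1)" a "zeta l"] n1 ca_not by simp
      show "1 - rho_seq (zeta l) a n = rho_seq a (zeta l) n"
        unfolding rho_eq a1 a2 using n by (simp add: field_simps)
    qed
    show ?thesis by (rule Lim_transform_eventually[OF r1 ev])
  qed
  show ?thesis using th rh by blast
qed

theorem mainTheorem3:
  shows "(\<forall>k::nat. k \<ge> 2 \<longrightarrow> (\<forall>b::real.
            (\<forall>z. z \<noteq> (0, 0) \<longrightarrow> theta_seq (zeta k) b z \<longlonglongrightarrow> theta_formula k b) \<and>
            rho_seq (zeta k) b \<longlonglongrightarrow> real k * theta_formula k b))
       \<and> (\<forall>l::nat. l \<ge> 2 \<longrightarrow> (\<forall>a::real.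
            (\<forall>z. z \<noteq> (0, 0) \<longrightarrow> theta_seq a (zeta l) z \<longlonglongrightarrow> theta_formula l a) \<and>
            rho_seq a (zeta l) \<longlonglongrightarrow> 1 - real l * theta_formula l a))"
  using part1 part2 by blast

end
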